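(* Let $(\mathbf{Z}_\kappa,\Sigma)$ be a ring of Euclidean integers for the infinite cardinal $\kappa$. Let $\eta,\gamma<\kappa$ and let $\mathbf{x}\in\mathbb{Z}^\kappa$ satisfy $x_\alpha=0$ for all $\alpha\ge 2^\eta$. Define $\mathbf{y}\in\mathbb{Z}^\kappa$ by $y_\delta=x_\alpha$ if $\delta=2^\eta\gamma+\alpha$ for some $\alpha<2^\eta$, and $y_\delta=0$ otherwise. Then $\sum_\alpha x_\alpha=\sum_\delta y_\delta$.
   Context: Ordinal arithmetic ($2^\eta$, $2^\eta\gamma+\alpha$) is ordinary ordinal arithmetic. Every ordinal $\alpha$ has a unique base-2 normal form $\alpha=2^{\alpha_1}+\dots+2^{\alpha_n}$ with $\alpha_1>\dots>\alpha_n$; put $L_\alpha=\{\alpha_1,\dots,\alpha_n\}$. Formal inclusion: $\alpha\sqsubseteq\beta$ iff $L_\alpha\subseteq L_\beta$. $\alpha\vee\beta$ is the ordinal $\gamma$ with $L_\gamma=L_\alpha\cup L_\beta$. For $\mathbf{x}\in\mathbb{Z}^\kappa$, $\mathbf{f}_{\mathbf{x}}(\alpha)=\sum_{\beta\sqsubseteq\alpha}x_\beta$. A ring of Euclidean integers for $\kappa$ is a discretely ordered commutative integral domain $\mathbf{Z}_\kappa$ containing $\mathbb{Z}$ as an ordered subring, together with a map $\Sigma:\mathbb{Z}^\kappa\to\mathbf{Z}_\kappa$, written $\Sigma(\mathbf{x})=\sum_\alpha x_\alpha$, such that: (0) if only finitely many $x_\alpha\neq0$ then $\sum_\alpha x_\alpha$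 is the ordinary finite sum; (RA) every element of $\mathbf{Z}_\kappa$ is $\sum_\alpha x_\alpha$ for some $\mathbf{x}$; (LA) $u\sum_\alpha x_\alpha+v\sum_\alpha y_\alpha=\sum_\alpha(ux_\alpha+vy_\alpha)$ for $u,v\in\mathbb{Z}$; (CA) if there is $\theta<\kappa$ with $\mathbf{f}_{\mathbf{x}}(\delta)\le\mathbf{f}_{\mathbf{y}}(\delta)$ for all $\delta<\kappa$ with $\theta\sqsubseteq\delta$, then $\sum_\alpha x_\alpha\le\sum_\alpha y_\alpha$; (PA) $(\sum_\alpha x_\alpha)(\sum_\beta y_\beta)=\sum_\gamma z_\gamma$ with $z_\gamma=\sum_{\alpha\vee\beta=\gamma}x_\alpha y_\beta$. *)

theory Defs
  imports Main
begin

text \<open>Ordinals below the infinite cardinal kappa are modelled as the elements of a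
  type 'k of class wellorder whose natural order is a cardinal order (card_order)
  on an infinite universe.\<close>

definition ord_iso_on :: "('a \<Rightarrow> 'a \<Rightarrow> bool) \<Rightarrow> 'a set \<Rightarrow> ('b \<Rightarrow> 'b \<Rightarrow> bool) \<Rightarrow> 'b set \<Rightarrow> bool" where
  "ord_iso_on lA A lB B \<longleftrightarrow>
     (\<exists>f. bij_betw f A B \<and> (\<forall>a\<in>A. \<forall>b\<in>A. lA a b \<longleftrightarrow> lB (f a) (f b)))"

definition ozero :: "'k::wellorder" where
  "ozero = (LEAST x. True)"

definition is_oadd :: "'k::wellorder \<Rightarrow> 'k \<Rightarrow> 'k \<Rightarrow> bool" where
  "is_oadd \<alpha> \<beta> \<delta> \<longleftrightarrow> \<alpha> \<le> \<delta> \<and> ord_iso_on (<) {x. x < \<beta>} (<) {x. \<alpha> \<le> x \<and> x < \<delta>}"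

text \<open>delta = alpha * beta: order type of beta x alpha, lexicographic with beta major.\<close>
definition lexless :: "'k::wellorder \<times> 'k \<Rightarrow> 'k \<times> 'k \<Rightarrow> bool" where
  "lexless p q \<longleftrightarrow> fst p < fst q \<or> (fst p = fst q \<and> snd p < snd q)"

definition is_omul :: "'k::wellorder \<Rightarrow> 'k \<Rightarrow> 'k \<Rightarrow> bool" where
  "is_omul \<alpha> \<beta> \<delta> \<longleftrightarrow> ord_iso_on lexless ({x. x < \<beta>} \<times> {x. x < \<alpha>}) (<) {x. x < \<delta>}"

text \<open>delta = 2^eta: order type of the finite subsets of eta (finitely supported
  functions eta -> 2), compared at the largest point of difference.\<close>
definition finless :: "'k::wellorder set \<Rightarrow> 'k set \<Rightarrow> bool" where
  "finless A B \<longleftrightarrow> A \<noteq> B \<and> Max ((A - B) \<union> (B - A)) \<in> B"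

definition is_opow2 :: "'k::wellorder \<Rightarrow> 'k \<Rightarrow> bool" where
  "is_opow2 \<eta> \<delta> \<longleftrightarrow> ord_iso_on finless {A. finite A \<and> A \<subseteq> {x. x < \<eta>}} (<) {x. x < \<delta>}"

definition oadd :: "'k::wellorder \<Rightarrow> 'k \<Rightarrow> 'k" where
  "oadd \<alpha> \<beta> = (THE \<delta>. is_oadd \<alpha> \<beta> \<delta>)"

definition omul :: "'k::wellorder \<Rightarrow> 'k \<Rightarrow> 'k" where
  "omul \<alpha> \<beta> = (THE \<delta>. is_omul \<alpha> \<beta> \<delta>)"

definition opow2 :: "'k::wellorder \<Rightarrow> 'k" where
  "opow2 \<eta> = (THE \<delta>. is_opow2 \<eta> \<delta>)"

fun is_nfsum :: "'k::wellorder list \<Rightarrow> 'k \<Rightarrow> bool" where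
  "is_nfsum [] \<delta> \<longleftrightarrow> \<delta> = ozero"
| "is_nfsum (e # es) \<delta> \<longleftrightarrow> (\<exists>p q. is_opow2 e p \<and> is_nfsum es q \<and> is_oadd p q \<delta>)"

definition Lset :: "'k::wellorder \<Rightarrow> 'k set" where
  "Lset \<alpha> = (THE E. finite E \<and> is_nfsum (rev (sorted_list_of_set E)) \<alpha>)"

definition formal_incl :: "'k::wellorder \<Rightarrow> 'k \<Rightarrow> bool" where
  "formal_incl \<alpha> \<beta> \<longleftrightarrow> Lset \<alpha> \<subseteq> Lset \<beta>"

definition ojoin :: "'k::wellorder \<Rightarrow> 'k \<Rightarrow> 'k" where
  "ojoin \<alpha> \<beta> = (THE \<gamma>. Lset \<gamma> = Lset \<alpha> \<union> Lset \<beta>)"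

definition fx :: "('k::wellorder \<Rightarrow> int) \<Rightarrow> 'k \<Rightarrow> int" where
  "fx x \<alpha> = (\<Sum>\<beta>\<in>{\<beta>. formal_incl \<beta> \<alpha>}. x \<beta>)"

definition euclidean_integers :: "(('k::wellorder \<Rightarrow> int) \<Rightarrow> 'z::linordered_idom) \<Rightarrow> bool" where
  "euclidean_integers S \<longleftrightarrow>
     (\<forall>z::'z. 0 < z \<longrightarrow> 1 \<le> z) \<and>
     (\<forall>x. finite {\<alpha>. x \<alpha> \<noteq> 0} \<longrightarrow> S x = of_int (\<Sum>\<alpha>\<in>{\<alpha>. x \<alpha> \<noteq> 0}. x \<alpha>)) \<and>
     surj S \<and>
     (\<forall>u v x y. of_int u * S x + of_int v * S y = S (\<lambda>\<alpha>. u * x \<alpha> + v * y \<alpha>)) \<and>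
     (\<forall>x y. (\<exists>\<theta>. \<forall>\<delta>. formal_incl \<theta> \<delta> \<longrightarrow> fx x \<delta> \<le> fx y \<delta>) \<longrightarrow> S x \<le> S y) \<and>
     (\<forall>x y. S x * S y =
        S (\<lambda>\<gamma>. \<Sum>(\<alpha>, \<beta>)\<in>{(\<alpha>, \<beta>). ojoin \<alpha> \<beta> = \<gamma>}. x \<alpha> * y \<beta>))"

end

theory Submission
  imports Defs
begin

unbundle cardinal_syntax


lemma finless_iff:
  assumes "finite A" "finite B"
  shows "finless A B \<longleftrightarrow> (\<exists>m. m \<in> B \<and> m \<notin> A \<and> (\<forall>x. m < x \<longrightarrow> (x \<in> A \<longleftrightarrow> x \<in> B)))"
proof
  assume h: "finless A B"
  let ?D = "(A - B) \<union> (B - A)"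
  have fin: "finite ?D" using assms by auto
  have ne: "?D \<noteq> {}" using h unfolding finless_def by auto
  have mD: "Max ?D \<in> ?D" using Max_in[OF fin ne] .
  have mB: "Max ?D \<in> B" using h unfolding finless_def by auto
  show "\<exists>m. m \<in> B \<and> m \<notin> A \<and> (\<forall>x. m < x \<longrightarrow> (x \<in> A \<longleftrightarrow> x \<in> B))"
  proof (intro exI conjI allI impI)
    show "Max ?D \<in> B" by fact
    show "Max ?D \<notin> A" using mD mB by auto
    fix x assume "Max ?D < x"
    then have "x \<notin> ?D" using Max_ge[OF fin] by (meson leD)
    then show "x \<in> A \<longleftrightarrow> x \<in> B" by auto
  qed
next
  assume "\<exists>m. m \<in> B \<and> m \<notin> A \<and> (\<forall>x. m < x \<longrightarrow> (x \<in> A \<longleftrightarrow> x \<in> B))"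
  then obtain m where m: "m \<in> B" "m \<notin> A" "\<forall>x. m < x \<longrightarrow> (x \<in> A \<longleftrightarrow> x \<in> B)" by blast
  let ?D = "(A - B) \<union> (B - A)"
  have fin: "finite ?D" using assms by auto
  have "Max ?D = m"
  proof (rule Max_eqI[OF fin])
    fix y assume "y \<in> ?D" then show "y \<le> m" using m(3) by (meson DiffE UnE not_le_imp_less)
  next
    show "m \<in> ?D" using m by auto
  qed
  then show "finless A B" unfolding finless_def using m by auto
qed

lemma finless_irrefl: "\<not> finless A A"
  unfolding finless_def by auto

lemma finless_asym: assumes "finite A" "finite B" "finless A B" shows "\<not> finless B A"
proof
  assume "finless B A"
  then obtain m2 where m2: "m2 \<in> A" "m2 \<notin> B" "\<forall>x. m2 < x \<longrightarrow> (x \<in> B \<longleftrightarrow> x \<in> A)"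
    using assms finless_iff by blast
  obtain m1 where m1: "m1 \<in> B" "m1 \<notin> A" "\<forall>x. m1 < x \<longrightarrow> (x \<in> A \<longleftrightarrow> x \<in> B)"
    using assms finless_iff by blast
  show False using m1 m2 by (metis linorder_neqE)
qed

lemma finless_total: "finite A \<Longrightarrow> finite B \<Longrightarrow> A \<noteq> B \<Longrightarrow> finless A B \<or> finless B A"
proof -
  assume fa: "finite A" and fb: "finite B" and ne: "A \<noteq> B"
  let ?D = "(A - B) \<union> (B - A)"
  have "?D \<noteq> {}" using ne by auto
  then have "Max ?D \<in> ?D" using fa fb by (intro Max_in) auto
  then show ?thesis unfolding finless_def using ne by (auto simp: Un_commute)
qed

lemma finless_trans:
  assumes f: "finite A" "finite B" "finite C" and h: "finless A B" "finless B C"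
  shows "finless A C"
proof -
  obtain m1 where m1: "m1 \<in> B" "m1 \<notin> A" "\<forall>x. m1 < x \<longrightarrow> (x \<in> A \<longleftrightarrow> x \<in> B)"
    using h(1) f finless_iff by blast
  obtain m2 where m2: "m2 \<in> C" "m2 \<notin> B" "\<forall>x. m2 < x \<longrightarrow> (x \<in> B \<longleftrightarrow> x \<in> C)"
    using h(2) f finless_iff by blast
  have "m1 \<noteq> m2" using m1 m2 by auto
  then consider "m1 < m2" | "m2 < m1" by (meson linorder_neqE)
  then show ?thesis
  proof cases
    case 1
    then have "m2 \<notin> A" using m1 m2 by auto
    then show ?thesis using finless_iff[OF f(1) f(3)] m1 m2 1
      by (meson order.strict_trans)
  next
    case 2
    then have "m1 \<in> C" using m1 m2 by auto
    then show ?thesis using finless_iff[OF f(1) f(3)] m1 m2 2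
      by (meson order.strict_trans)
  qed
qed

lemma finless_empty: "\<not> finless A {}"
  unfolding finless_def by auto

lemma empty_finless: "finite A \<Longrightarrow> A \<noteq> {} \<Longrightarrow> finless {} A"
  unfolding finless_def using Max_in by auto


lemma finless_dec:
  fixes t :: "'k::wellorder"
  assumes f: "finite A" "finite B"
  shows "finless A B \<longleftrightarrow>
    finless {x\<in>A. t \<le> x} {x\<in>B. t \<le> x} \<or>
    ({x\<in>A. t \<le> x} = {x\<in>B. t \<le> x} \<and> finless {x\<in>A. x < t} {x\<in>B. x < t})"
  (is "?L \<longleftrightarrow> ?R")
proof -
  have fh: "finite {x\<in>A. t \<le> x}" "finite {x\<in>B. t \<le> x}" "finite {x\<in>A. x < t}" "finite {x\<in>B. x < t}"
    using f by auto
  show ?thesis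
  proof
    assume ?L
    then obtain m where m: "m \<in> B" "m \<notin> A" "\<forall>x. m < x \<longrightarrow> (x \<in> A \<longleftrightarrow> x \<in> B)"
      using f finless_iff by blast
    show ?R
    proof (cases "t \<le> m")
      case True
      have "finless {x\<in>A. t \<le> x} {x\<in>B. t \<le> x}"
        unfolding finless_iff[OF fh(1,2)] using m True by (intro exI[of _ m]) auto
      then show ?thesis by blast
    next
      case False
      then have eq: "{x\<in>A. t \<le> x} = {x\<in>B. t \<le> x}" using m(3) by auto
      have "finless {x\<in>A. x < t} {x\<in>B. x < t}"
        unfolding finless_iff[OF fh(3,4)] using m False by (intro exI[of _ m]) auto
      then show ?thesis using eq by blast
    qed
  next
    assume ?R
    then show ?L
    proof
      assume "finless {x\<in>A. t \<le> x} {x\<in>B. t \<le> x}"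
      then obtain m where m: "m \<in> B" "t \<le> m" "m \<notin> A" "\<forall>x. m < x \<longrightarrow> (x \<in> A \<and> t \<le> x \<longleftrightarrow> x \<in> B \<and> t \<le> x)"
        unfolding finless_iff[OF fh(1,2)] by auto
      show ?L unfolding finless_iff[OF f] using m
        by (intro exI[of _ m]) (meson dual_order.strict_trans2 less_imp_le)
    next
      assume h: "{x\<in>A. t \<le> x} = {x\<in>B. t \<le> x} \<and> finless {x\<in>A. x < t} {x\<in>B. x < t}"
      then obtain m where m: "m \<in> B" "m < t" "m \<notin> A" "\<forall>x. m < x \<longrightarrow> (x \<in> A \<and> x < t \<longleftrightarrow> x \<in> B \<and> x < t)"
        unfolding finless_iff[OF fh(3,4)] by auto
      have eq: "\<forall>x. t \<le> x \<longrightarrow> (x \<in> A \<longleftrightarrow> x \<in> B)" using h by blast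
      show ?L unfolding finless_iff[OF f] using m eq
        by (intro exI[of _ m]) (meson not_le)
    qed
  qed
qed

lemma finless_step:
  fixes m :: "'k::wellorder"
  assumes IH: "\<And>S'. S' \<noteq> {} \<Longrightarrow> \<forall>A\<in>S'. finite A \<and> A \<subseteq> {x. x < m} \<Longrightarrow> \<exists>A\<in>S'. \<forall>B\<in>S'. \<not> finless B A"
    and A1: "A1 \<in> S" and fin: "\<forall>A\<in>S. finite A" and ne: "{} \<notin> S"
    and mdef: "m = (LEAST y. \<exists>A\<in>S. y = Max A)"
  shows "\<exists>A\<in>S. \<forall>B\<in>S. \<not> finless B A"
proof -
  have ex0: "\<exists>y. \<exists>A\<in>S. y = Max A" using A1 by blast
  have ex: "\<exists>A\<in>S. m = Max A" unfolding mdef by (rule LeastI_ex[OF ex0])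
  have mle: "\<And>A. A \<in> S \<Longrightarrow> m \<le> Max A" unfolding mdef by (auto intro: Least_le)
  define S' where "S' = {A - {m} | A. A \<in> S \<and> Max A = m}"
  have "S' \<noteq> {}" using ex unfolding S'_def by auto
  moreover have "\<forall>A\<in>S'. finite A \<and> A \<subseteq> {x. x < m}"
  proof
    fix A' assume "A' \<in> S'"
    then obtain A where A: "A \<in> S" "Max A = m" "A' = A - {m}" unfolding S'_def by auto
    have "A \<noteq> {}" using A ne by auto
    then have "\<forall>x\<in>A. x \<le> m" using A fin by auto
    then show "finite A' \<and> A' \<subseteq> {x. x < m}" using A fin by (auto simp: order.order_iff_strict)
  qed
  ultimately obtain A0' where A0': "A0' \<in> S'" "\<forall>B\<in>S'. \<not> finless B A0'" using IH by blast
  then obtain A0 where A0: "A0 \<in> S" "Max A0 = m" "A0' = A0 - {m}" unfolding S'_def by auto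
  have A0ne: "A0 \<noteq> {}" using A0 ne by auto
  have mA0: "m \<in> A0" using A0 A0ne fin Max_in by blast
  have A0le: "\<forall>x\<in>A0. x \<le> m" using A0 A0ne fin by auto
  show ?thesis
  proof (intro bexI[OF _ A0(1)] ballI notI)
    fix B assume B: "B \<in> S" "finless B A0"
    have fB: "finite B" using B fin by auto
    have fA0: "finite A0" using A0 fin by auto
    obtain w where w: "w \<in> A0" "w \<notin> B" "\<forall>x. w < x \<longrightarrow> (x \<in> B \<longleftrightarrow> x \<in> A0)"
      using B(2) finless_iff[OF fB fA0] by blast
    have Bne: "B \<noteq> {}" using B ne by auto
    have MB: "Max B \<in> B" using Bne fB Max_in by blast
    have "Max B = m"
    proof (rule ccontr)
      assume "Max B \<noteq> m"
      then have "m < Max B" using mle[OF B(1)] by auto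
      moreover have "w \<le> m" using w A0le by auto
      ultimately have "Max B \<in> A0" using w(3) MB by auto
      then show False using A0le \<open>m < Max B\<close> by fastforce
    qed
    then have "B - {m} \<in> S'" unfolding S'_def using B by auto
    moreover have "finless (B - {m}) A0'"
    proof -
      have "w \<noteq> m" using w MB \<open>Max B = m\<close> by auto
      then show ?thesis unfolding A0(3) finless_iff[OF finite_Diff[OF fB] finite_Diff[OF fA0]]
        using w by (intro exI[of _ w]) auto
    qed
    ultimately show False using A0' by blast
  qed
qed

lemma finless_bounded_min:
  fixes e :: "'k::wellorder"
  shows "\<forall>S. S \<noteq> {} \<longrightarrow> (\<forall>A\<in>S. finite A \<and> A \<subseteq> {x. x < e}) \<longrightarrow> (\<exists>A\<in>S. \<forall>B\<in>S. \<not> finless B A)"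
proof (induction e rule: less_induct)
  case (less e)
  show ?case
  proof (intro allI impI)
    fix S :: "'k set set" assume ne: "S \<noteq> {}" and h: "\<forall>A\<in>S. finite A \<and> A \<subseteq> {x. x < e}"
    show "\<exists>A\<in>S. \<forall>B\<in>S. \<not> finless B A"
    proof (cases "{} \<in> S")
      case True then show ?thesis using finless_empty by blast
    next
      case False
      obtain A1 where A1: "A1 \<in> S" using ne by auto
      define m where "m = (LEAST y. \<exists>A\<in>S. y = Max A)"
      have "m \<le> Max A1" unfolding m_def using A1 by (auto intro: Least_le)
      moreover have "Max A1 < e" using A1 h False by (metis Max_in mem_Collect_eq subset_eq)
      ultimately have "m < e" by auto
      then show ?thesis using finless_step[OF _ A1 _ False m_def] less h by blast
    qed
  qed
qed

lemma finless_min: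
  fixes S :: "'k::wellorder set set"
  assumes ne: "S \<noteq> {}" and fin: "\<forall>A\<in>S. finite A"
  shows "\<exists>A\<in>S. \<forall>B\<in>S. \<not> finless B A"
proof (cases "{} \<in> S")
  case True then show ?thesis using finless_empty by blast
next
  case False
  obtain A1 where A1: "A1 \<in> S" using ne by auto
  define m where "m = (LEAST y. \<exists>A\<in>S. y = Max A)"
  show ?thesis using finless_step[OF _ A1 fin False m_def] finless_bounded_min[of m] by blast
qed



lemma fin_fin: "finite A \<Longrightarrow> infinite B \<Longrightarrow> |A| <o |B|"
  using card_of_Well_order[of A] card_of_Well_order[of B] Field_card_of[of A] Field_card_of[of B]
    finite_ordLess_infinite[of "|A|" "|B|"] by simp

lemma card_Fin_le:
  assumes inf: "infinite B"
  shows "|{X. X \<subseteq> B \<and> finite X}| \<le>o |B|"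
proof -
  define G where "G n = {X. X \<subseteq> B \<and> finite X \<and> card X \<le> n}" for n
  have G: "|G n| \<le>o |B|" for n
  proof (induction n)
    case 0
    have "G 0 \<subseteq> {{}}" unfolding G_def by auto
    moreover have "|{{}} :: 'a set set| \<le>o |B|"
      using fin_fin[of "{{}}" B] inf ordLess_imp_ordLeq by blast
    ultimately show ?case using card_of_mono1 ordLeq_transitive by blast
  next
    case (Suc n)
    have sub: "G (Suc n) \<subseteq> G n \<union> (\<lambda>(a,X). insert a X) ` (B \<times> G n)"
    proof
      fix X assume X: "X \<in> G (Suc n)"
      show "X \<in> G n \<union> (\<lambda>(a,X). insert a X) ` (B \<times> G n)"
      proof (cases "X = {}")
        case True then show ?thesis unfolding G_def by auto
      next
        case False
        then obtain a where a: "a \<in> X" by auto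
        have "X - {a} \<in> G n" using X a unfolding G_def
          by (auto simp: card_Diff_singleton)
        moreover have "X = insert a (X - {a})" using a by auto
        moreover have "a \<in> B" using X a unfolding G_def by auto
        ultimately show ?thesis by blast
      qed
    qed
    have "|B \<times> G n| \<le>o |B \<times> B|" using Suc card_of_Times_mono2 by blast
    moreover have "|B \<times> B| =o |B|" using card_of_Times_same_infinite inf by blast
    ultimately have "|B \<times> G n| \<le>o |B|" using ordLeq_ordIso_trans by blast
    then have "|(\<lambda>(a,X). insert a X) ` (B \<times> G n)| \<le>o |B|"
      using card_of_image ordLeq_transitive by blast
    then have "|G n \<union> (\<lambda>(a,X). insert a X) ` (B \<times> G n)| \<le>o |B|"
      using card_of_Un_ordLeq_infinite_Field[of "|B|"] Suc inf
      by (simp add: Field_card_of card_of_Card_order card_of_card_order_on)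
    then show ?case using sub card_of_mono1 ordLeq_transitive by blast
  qed
  have eq: "{X. X \<subseteq> B \<and> finite X} = (\<Union>n\<in>(UNIV::nat set). G n)"
    unfolding G_def by auto
  have "|\<Union>n\<in>(UNIV::nat set). G n| \<le>o |B|"
    using card_of_UNION_ordLeq_infinite[OF inf] G infinite_iff_card_of_nat inf by blast
  then show ?thesis using eq by simp
qed

lemma card_Fin_less:
  assumes inf: "infinite C" and lt: "|B| <o |C|"
  shows "|{X. X \<subseteq> B \<and> finite X}| <o |C|"
proof (cases "finite B")
  case True
  then have "finite {X. X \<subseteq> B \<and> finite X}" by auto
  then show ?thesis using fin_fin inf by blast
next
  case False
  then show ?thesis using card_Fin_le ordLeq_ordLess_trans lt by blast
qed

lemma wo_iso:
  fixes r :: "'a rel"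
  assumes card: "card_order {(a::'k::wellorder, b). a \<le> b}" and W: "Well_order r"
    and c1: "|UNIV::'k set| \<le>o |Field r|"
    and c3: "\<forall>a\<in>Field r. |underS r a| <o |UNIV::'k set|"
  shows "\<exists>f. iso r {(a::'k,b). a \<le> b} f"
proof -
  let ?R = "{(a::'k,b). a \<le> b}"
  have WO: "well_order_on UNIV ?R" using card unfolding card_order_on_def by (elim conjE)
  have FR: "Field ?R = UNIV" using well_order_on_Well_order[OF WO] by (elim conjE) (rule sym)
  have WR: "Well_order ?R" using WO FR by simp
  have CR: "Card_order ?R" using card FR by simp
  have RU0: "|Field ?R| =o ?R" by (rule card_of_Field_ordIso[OF CR])
  have RU: "?R =o |UNIV::'k set|" using ordIso_symmetric[OF RU0] FR by simp
  have uR: "|underS ?R a| <o |UNIV::'k set|" for a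
  proof -
    have "|underS ?R a| <o ?R" by (rule card_of_underS[OF CR]) (simp add: FR)
    then show ?thesis using ordLess_ordIso_trans[OF _ RU] by blast
  qed
  have n1: "\<not> r <o ?R"
  proof
    assume "r <o ?R"
    then obtain a where a: "r =o Restr ?R (underS ?R a)"
      using ordLess_iff_ordIso_Restr[OF WR W] by blast
    have x1: "|Field r| =o |Field (Restr ?R (underS ?R a))|" using card_of_cong[OF a] .
    have x2: "|Field (Restr ?R (underS ?R a))| \<le>o |underS ?R a|"
      by (rule card_of_mono1[OF Field_Restr_subset])
    have "|Field r| <o |UNIV::'k set|"
      by (rule ordIso_ordLess_trans[OF x1 ordLeq_ordLess_trans[OF x2 uR]])
    then show False using c1 not_ordLess_ordLeq by blast
  qed
  have n2: "\<not> ?R <o r"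
  proof
    assume "?R <o r"
    then obtain a where a: "a \<in> Field r" "?R =o Restr r (underS r a)"
      using ordLess_iff_ordIso_Restr[OF W WR] by blast
    have x1: "|Field ?R| =o |Field (Restr r (underS r a))|" using card_of_cong[OF a(2)] .
    have x2: "|Field (Restr r (underS r a))| \<le>o |underS r a|"
      by (rule card_of_mono1[OF Field_Restr_subset])
    have x3: "|underS r a| <o |UNIV::'k set|" using c3 a(1) by blast
    have "|Field ?R| <o |UNIV::'k set|"
      by (rule ordIso_ordLess_trans[OF x1 ordLeq_ordLess_trans[OF x2 x3]])
    then show False using ordLess_irreflexive FR by metis
  qed
  have "r <o ?R \<or> ?R \<le>o r" by (rule ordLess_or_ordLeq[OF W WR])
  then have "?R \<le>o r" using n1 by blast
  then have "?R =o r" using n2 ordLeq_iff_ordLess_or_ordIso by blast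
  then have "r =o ?R" by (rule ordIso_symmetric)
  then show ?thesis unfolding ordIso_def by blast
qed



lemma ord_iso_sym:
  assumes "ord_iso_on lA A lB B" shows "ord_iso_on lB B lA A"
proof -
  obtain f where f: "bij_betw f A B" "\<forall>a\<in>A. \<forall>b\<in>A. lA a b \<longleftrightarrow> lB (f a) (f b)"
    using assms unfolding ord_iso_on_def by blast
  let ?g = "inv_into A f"
  have g: "bij_betw ?g B A" using bij_betw_inv_into[OF f(1)] .
  have "\<forall>a\<in>B. \<forall>b\<in>B. lB a b \<longleftrightarrow> lA (?g a) (?g b)"
  proof (intro ballI)
    fix a b assume ab: "a \<in> B" "b \<in> B"
    have "?g a \<in> A" "?g b \<in> A" using g ab bij_betwE by blast+
    moreover have "f (?g a) = a" "f (?g b) = b" using f(1) ab bij_betw_inv_into_right by fast+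
    ultimately show "lB a b \<longleftrightarrow> lA (?g a) (?g b)" using f(2) by metis
  qed
  then show ?thesis unfolding ord_iso_on_def using g by blast
qed

lemma ord_iso_trans:
  assumes "ord_iso_on lA A lB B" "ord_iso_on lB B lC C" shows "ord_iso_on lA A lC C"
proof -
  obtain f where f: "bij_betw f A B" "\<forall>a\<in>A. \<forall>b\<in>A. lA a b \<longleftrightarrow> lB (f a) (f b)"
    using assms unfolding ord_iso_on_def by blast
  obtain g where g: "bij_betw g B C" "\<forall>a\<in>B. \<forall>b\<in>B. lB a b \<longleftrightarrow> lC (g a) (g b)"
    using assms unfolding ord_iso_on_def by blast
  have "bij_betw (g \<circ> f) A C" using f g bij_betw_trans by blast
  moreover have "\<forall>a\<in>A. \<forall>b\<in>A. lA a b \<longleftrightarrow> lC ((g \<circ> f) a) ((g \<circ> f) b)"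
  proof (intro ballI)
    fix a b assume ab: "a \<in> A" "b \<in> A"
    then have "f a \<in> B" "f b \<in> B" using f(1) bij_betwE by blast+
    then show "lA a b \<longleftrightarrow> lC ((g \<circ> f) a) ((g \<circ> f) b)" using f(2) g(2) ab by simp
  qed
  ultimately show ?thesis unfolding ord_iso_on_def by blast
qed

lemma interval_iso_eq:
  fixes p d1 d2 :: "'k::wellorder"
  assumes p1: "p \<le> d1" and p2: "p \<le> d2"
    and iso: "ord_iso_on (<) {x. p \<le> x \<and> x < d1} (<) {x. p \<le> x \<and> x < d2}"
  shows "d1 = d2"
proof -
  let ?A = "{x. p \<le> x \<and> x < d1}" and ?B = "{x. p \<le> x \<and> x < d2}"
  obtain f where f: "bij_betw f ?A ?B" "\<forall>a\<in>?A. \<forall>b\<in>?A. a < b \<longleftrightarrow> f a < f b"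
    using iso unfolding ord_iso_on_def by blast
  have fid: "x \<in> ?A \<longrightarrow> f x = x" for x
  proof (induction x rule: less_induct)
    case (less x)
    show ?case
    proof
      assume xA: "x \<in> ?A"
      have fxB: "f x \<in> ?B" using f(1) xA bij_betwE by blast
      show "f x = x"
      proof (rule ccontr)
        assume ne: "f x \<noteq> x"
        then consider "f x < x" | "x < f x" by (meson linorder_neqE)
        then show False
        proof cases
          case 1
          then have fxA: "f x \<in> ?A" using fxB xA by auto
          then have "f (f x) = f x" using less 1 by blast
          then have "f x = x" using f(1) fxA xA unfolding bij_betw_def inj_on_def by blast
          then show False using ne by simp
        next
          case 2
          then have "x \<in> ?B" using fxB xA by auto
          then have "x \<in> f ` ?A" using f(1) unfolding bij_betw_def by simp
          then obtain y where y: "y \<in> ?A" "f y = x" by blast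
          have "y < x" using f(2) y xA 2 by auto
          then have "f y = y" using less y by blast
          then show False using y \<open>y < x\<close> by simp
        qed
      qed
    qed
  qed
  have imgA: "f ` ?A = ?A" using fid by (auto intro: image_eqI)
  have imgB: "f ` ?A = ?B" using f(1) unfolding bij_betw_def by blast
  have "?A = ?B" using imgA imgB by simp
  show "d1 = d2"
  proof (rule ccontr)
    assume "d1 \<noteq> d2"
    then consider "d1 < d2" | "d2 < d1" by (meson linorder_neqE)
    then show False
    proof cases
      case 1 then have "d1 \<in> ?B" using p1 by auto
      then show False using \<open>?A = ?B\<close> by auto
    next
      case 2 then have "d2 \<in> ?A" using p2 by auto
      then show False using \<open>?A = ?B\<close> by auto
    qed
  qed
qed

definition rF :: "('k::wellorder set \<times> 'k set) set" where
  "rF = {(A,B). finite A \<and> finite B \<and> (A = B \<or> finless A B)}"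

lemma Field_rF: "Field (rF :: ('k::wellorder set \<times> 'k set) set) = {A. finite A}"
  by (rule set_eqI) (auto simp: Field_iff rF_def)

lemma Well_order_rF: "Well_order (rF :: ('k::wellorder set \<times> 'k set) set)"
proof -
  have refl: "refl_on (Field (rF::'k set rel)) (rF::'k set rel)" unfolding refl_on_def Field_rF by (auto simp: rF_def)
  have sub: "(rF::'k set rel) \<subseteq> Field (rF::'k set rel) \<times> Field (rF::'k set rel)" unfolding Field_rF by (auto simp: rF_def)
  have tr: "trans (rF::'k set rel)" unfolding trans_def rF_def using finless_trans by blast
  have an: "antisym (rF::'k set rel)" unfolding antisym_def rF_def using finless_asym by blast
  have to: "total_on (Field (rF::'k set rel)) (rF::'k set rel)" unfolding total_on_def Field_rF by (auto simp: rF_def dest: finless_total)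
  have wf: "wf ((rF::'k set rel) - Id)"
    unfolding wf_eq_minimal
  proof (intro allI impI)
    fix Q :: "'k set set" and x assume xQ: "x \<in> Q"
    show "\<exists>z\<in>Q. \<forall>y. (y, z) \<in> (rF::'k set rel) - Id \<longrightarrow> y \<notin> Q"
    proof (cases "Q \<inter> {A. finite A} = {}")
      case True
      then have "infinite x" using xQ by auto
      then show ?thesis using xQ unfolding rF_def by auto
    next
      case False
      then obtain z where z: "z \<in> Q \<inter> {A. finite A}" "\<forall>B\<in>Q \<inter> {A. finite A}. \<not> finless B z"
        using finless_min[of "Q \<inter> {A. finite A}"] by blast
      then show ?thesis unfolding rF_def by auto
    qed
  qed
  show ?thesis unfolding well_order_on_def linear_order_on_def partial_order_on_def preorder_on_def
    using refl sub tr an to wf by blast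
qed

lemma underS_rF:
  assumes "finite E" shows "underS rF E = {A. finite A \<and> finless A E}"
  unfolding underS_def rF_def using assms finless_irrefl by auto

lemma finless_le_Max:
  fixes E :: "'k::wellorder set"
  assumes "finite A" "finite E" "finless A E"
  shows "A \<subseteq> {x. x \<le> Max E}"
proof
  fix x assume xA: "x \<in> A"
  obtain m where m: "m \<in> E" "m \<notin> A" "\<forall>x. m < x \<longrightarrow> (x \<in> A \<longleftrightarrow> x \<in> E)"
    using assms finless_iff by blast
  have "m \<le> Max E" using m assms by auto
  show "x \<in> {x. x \<le> Max E}"
  proof (rule ccontr)
    assume "x \<notin> {x. x \<le> Max E}"
    then have "Max E < x" by auto
    then have "x \<in> E" using m xA \<open>m \<le> Max E\<close> by auto
    then show False using \<open>Max E < x\<close> assms by (meson Max_ge leD)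
  qed
qed

lemma exists_N:
  assumes card: "card_order {(a::'k::wellorder, b). a \<le> b}" and inf: "infinite (UNIV :: 'k set)"
  shows "\<exists>N::'k set \<Rightarrow> 'k. bij_betw N {A. finite A} UNIV \<and>
            (\<forall>A B. finite A \<longrightarrow> finite B \<longrightarrow> (finless A B \<longleftrightarrow> N A < N B))"
proof -
  let ?R = "{(a::'k,b). a \<le> b}"
  have WO: "well_order_on UNIV ?R" using card unfolding card_order_on_def by (elim conjE)
  have FR: "Field ?R = UNIV" using well_order_on_Well_order[OF WO] by (elim conjE) (rule sym)
  have WR: "Well_order ?R" using WO FR by simp
  have CR: "Card_order ?R" using card FR by simp
  have RU0: "|Field ?R| =o ?R" by (rule card_of_Field_ordIso[OF CR])
  have RU: "?R =o |UNIV::'k set|" using ordIso_symmetric[OF RU0] FR by simp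
  have uR: "|{x. x < a}| <o |UNIV::'k set|" for a :: 'k
  proof -
    have eq: "underS ?R a = {x. x < a}" unfolding underS_def by auto
    have "|underS ?R a| <o ?R" by (rule card_of_underS[OF CR]) (simp add: FR)
    then have "|underS ?R a| <o |UNIV::'k set|" using ordLess_ordIso_trans[OF _ RU] by blast
    then show ?thesis unfolding eq .
  qed
  have uR2: "|{x. x \<le> a}| <o |UNIV::'k set|" for a :: 'k
  proof -
    have eq: "{x. x \<le> a} = {x. x < a} \<union> {a}" by auto
    have "|{a}| <o |UNIV::'k set|" using fin_fin inf by blast
    then have "|{x. x < a} \<union> {a}| <o |UNIV::'k set|" by (rule card_of_Un_ordLess_infinite[OF inf uR])
    then show ?thesis unfolding eq .
  qed
  have c1': "|UNIV::'k set| \<le>o |{A::'k set. finite A}|"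
    apply (rule iffD1[OF card_of_ordLeq])
    apply (rule exI[where x="\<lambda>x::'k. {x}"])
    by auto
  then have c1: "|UNIV::'k set| \<le>o |Field (rF::'k set rel)|" by (subst Field_rF)
  have c3: "\<forall>a\<in>Field (rF::'k set rel). |underS (rF::'k set rel) a| <o |UNIV::'k set|"
  proof
    fix E :: "'k set" assume "E \<in> Field (rF::'k set rel)"
    then have fE: "finite E" unfolding Field_rF by auto
    show "|underS (rF::'k set rel) E| <o |UNIV::'k set|"
    proof (cases "E = {}")
      case True
      then have "underS (rF::'k set rel) E = {}" using underS_rF[OF fE] finless_empty by auto
      then show ?thesis using fin_fin inf by (metis finite.emptyI)
    next
      case False
      have "underS (rF::'k set rel) E \<subseteq> {X. X \<subseteq> {x. x \<le> Max E} \<and> finite X}"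
        using underS_rF[OF fE] finless_le_Max fE by blast
      moreover have "|{X. X \<subseteq> {x. x \<le> Max E} \<and> finite X}| <o |UNIV::'k set|"
        using card_Fin_less[OF inf uR2] .
      ultimately show ?thesis using ordLeq_ordLess_trans[OF card_of_mono1] by blast
    qed
  qed
  obtain N where N: "iso (rF::'k set rel) ?R N" using wo_iso[OF card Well_order_rF c1 c3] by blast
  then have bN: "bij_betw N {A. finite A} UNIV"
    and oN: "\<forall>a\<in>Field (rF::'k set rel). \<forall>b\<in>Field (rF::'k set rel). (a, b) \<in> (rF::'k set rel) \<longleftrightarrow> (N a, N b) \<in> ?R"
    unfolding iso_iff2 Field_rF FR by auto
  have "\<forall>A B. finite A \<longrightarrow> finite B \<longrightarrow> (finless A B \<longleftrightarrow> N A < N B)"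
  proof (intro allI impI)
    fix A B :: "'k set" assume fA: "finite A" and fB: "finite B"
    have AB: "(A,B) \<in> (rF::'k set rel) \<longleftrightarrow> N A \<le> N B" and BA: "(B,A) \<in> (rF::'k set rel) \<longleftrightarrow> N B \<le> N A"
      using oN fA fB unfolding Field_rF by auto
    have inj: "N A = N B \<longleftrightarrow> A = B" using bN fA fB unfolding bij_betw_def inj_on_def by auto
    show "finless A B \<longleftrightarrow> N A < N B"
      using AB BA inj fA fB finless_irrefl finless_total unfolding rF_def
      by (metis (mono_tags, lifting) case_prodI mem_Collect_eq not_le order_le_less)
  qed
  then show ?thesis using bN by blast
qed



lemma iso_intro:
  assumes "inj_on f A" "f ` A = B" "\<forall>a\<in>A. \<forall>b\<in>A. lA a b \<longleftrightarrow> lB (f a) (f b)"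
  shows "ord_iso_on lA A lB B"
  unfolding ord_iso_on_def bij_betw_def using assms by blast

lemma ozero_le: "ozero \<le> (x::'k::wellorder)"
  unfolding ozero_def by (rule Least_le) simp

lemma lt_as_interval: "{x. x < d} = {x. ozero \<le> x \<and> x < (d::'k::wellorder)}"
  using ozero_le by auto

lemma lt_iso_eq:
  assumes "ord_iso_on (<) {x. x < d1} (<) {x. x < (d2::'k::wellorder)}" shows "d1 = d2"
proof -
  have "ord_iso_on (<) {x. ozero \<le> x \<and> x < d1} (<) {x. ozero \<le> x \<and> x < d2}"
    using assms by (simp only: lt_as_interval)
  then show ?thesis by (rule interval_iso_eq[OF ozero_le ozero_le])
qed

lemma is_opow2_unique: assumes "is_opow2 e d1" "is_opow2 e d2" shows "d1 = d2"
proof -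
  have h1: "ord_iso_on finless {A. finite A \<and> A \<subseteq> {x. x < e}} (<) {x. x < d1}"
    and h2: "ord_iso_on finless {A. finite A \<and> A \<subseteq> {x. x < e}} (<) {x. x < d2}"
    using assms unfolding is_opow2_def by auto
  show ?thesis by (rule lt_iso_eq[OF ord_iso_trans[OF ord_iso_sym[OF h1] h2]])
qed

lemma is_oadd_unique: assumes "is_oadd a b d1" "is_oadd a b d2" shows "d1 = d2"
proof -
  have h1: "ord_iso_on (<) {x. x < b} (<) {x. a \<le> x \<and> x < d1}" "a \<le> d1"
    and h2: "ord_iso_on (<) {x. x < b} (<) {x. a \<le> x \<and> x < d2}" "a \<le> d2"
    using assms unfolding is_oadd_def by auto
  show ?thesis by (rule interval_iso_eq[OF h1(2) h2(2) ord_iso_trans[OF ord_iso_sym[OF h1(1)] h2(1)]])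
qed

lemma is_omul_unique: assumes "is_omul a b d1" "is_omul a b d2" shows "d1 = d2"
proof -
  have h1: "ord_iso_on lexless ({x. x < b} \<times> {x. x < a}) (<) {x. x < d1}"
    and h2: "ord_iso_on lexless ({x. x < b} \<times> {x. x < a}) (<) {x. x < d2}"
    using assms unfolding is_omul_def by auto
  show ?thesis by (rule lt_iso_eq[OF ord_iso_trans[OF ord_iso_sym[OF h1] h2]])
qed

locale NS =
  fixes N :: "'k::wellorder set \<Rightarrow> 'k"
  assumes bN: "bij_betw N {A. finite A} UNIV"
    and mN: "\<And>A B. finite A \<Longrightarrow> finite B \<Longrightarrow> finless A B \<longleftrightarrow> N A < N B"
begin

definition Ni :: "'k \<Rightarrow> 'k set" where "Ni = inv_into {A. finite A} N"

lemma Ni_fin[simp]: "finite (Ni a)"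
  unfolding Ni_def using bN by (metis bij_betw_def inv_into_into iso_tuple_UNIV_I mem_Collect_eq)

lemma N_Ni[simp]: "N (Ni a) = a"
  unfolding Ni_def using bN by (simp add: bij_betw_def f_inv_into_f)

lemma Ni_N[simp]: "finite A \<Longrightarrow> Ni (N A) = A"
  unfolding Ni_def using bN by (simp add: bij_betw_def)

lemma N_inj: "finite A \<Longrightarrow> finite B \<Longrightarrow> N A = N B \<longleftrightarrow> A = B"
  by (metis Ni_N)

lemma lt_Ni: "a < b \<longleftrightarrow> finless (Ni a) (Ni b)"
  using mN[of "Ni a" "Ni b"] by simp

lemma N_empty: "N {} = ozero"
proof -
  have "\<not> x < N {}" for x using mN[of "Ni x" "{}"] finless_empty[of "Ni x"] by auto
  then show ?thesis using ozero_le by (metis antisym not_le)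
qed

lemma finless_single:
  assumes "finite A" shows "finless A {e} \<longleftrightarrow> A \<subseteq> {x. x < e}"
  unfolding finless_iff[OF assms finite.insertI[OF finite.emptyI]]
  by (auto simp: not_le) (metis not_less_iff_gr_or_eq)+

lemma lt_single: "a < N {e} \<longleftrightarrow> Ni a \<subseteq> {x. x < e}"
  using mN[of "Ni a" "{e}"] finless_single[of "Ni a" e] by simp

lemma is_opow2_Ne: "is_opow2 e (N {e})"
    unfolding is_opow2_def
  proof (rule iso_intro)
    show "inj_on N {A. finite A \<and> A \<subseteq> {x. x < e}}" using N_inj by (auto simp: inj_on_def)
    show "N ` {A. finite A \<and> A \<subseteq> {x. x < e}} = {x. x < N {e}}"
    proof
      show "N ` {A. finite A \<and> A \<subseteq> {x. x < e}} \<subseteq> {x. x < N {e}}"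
        using lt_single by auto
      show "{x. x < N {e}} \<subseteq> N ` {A. finite A \<and> A \<subseteq> {x. x < e}}"
        using lt_single by (auto intro!: image_eqI[of _ N "Ni _"])
    qed
    show "\<forall>a\<in>{A. finite A \<and> A \<subseteq> {x. x < e}}. \<forall>b\<in>{A. finite A \<and> A \<subseteq> {x. x < e}}. finless a b \<longleftrightarrow> N a < N b"
      using mN by auto
  qed

lemma hi_lo_split: "A = {x\<in>A. t \<le> x} \<union> {x\<in>A. x < t}" for t :: 'k
  by auto

lemma is_oadd_split:
  fixes t :: 'k
  assumes fH: "finite H" and H: "H \<subseteq> {x. t \<le> x}" and fL: "finite L" and L: "L \<subseteq> {x. x < t}"
  shows "is_oadd (N H) (N L) (N (H \<union> L))"
proof -
  have hiHL: "\<And>L'. L' \<subseteq> {x. x < t} \<Longrightarrow> {x\<in>H \<union> L'. t \<le> x} = H" using H by auto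
  have loHL: "\<And>L'. L' \<subseteq> {x. x < t} \<Longrightarrow> {x\<in>H \<union> L'. x < t} = L'" using H by auto
  have loH: "{x\<in>H. x < t} = {}" and hiH: "{x\<in>H. t \<le> x} = H" using H by auto
  have dec: "\<And>A B. finite A \<Longrightarrow> finite B \<Longrightarrow> finless A B \<longleftrightarrow>
    finless {x\<in>A. t \<le> x} {x\<in>B. t \<le> x} \<or>
    ({x\<in>A. t \<le> x} = {x\<in>B. t \<le> x} \<and> finless {x\<in>A. x < t} {x\<in>B. x < t})"
    by (rule finless_dec)
  have le: "N H \<le> N (H \<union> L)"
  proof (cases "L = {}")
    case True then show ?thesis by simp
  next
    case False
    have "finless H (H \<union> L)"
      using dec[of H "H \<union> L"] fH fL hiHL[OF L] loHL[OF L] hiH loH empty_finless[OF fL False]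
      by simp
    then show ?thesis using mN fH fL by (simp add: less_imp_le)
  qed
  have below: "\<And>x. x < N L \<Longrightarrow> Ni x \<subseteq> {y. y < t}"
  proof -
    fix x assume "x < N L"
    then have f: "finless (Ni x) L" using mN[of "Ni x" L] fL by simp
    have e: "{y\<in>L. t \<le> y} = {}" using L by auto
    have d: "finless {y\<in>Ni x. t \<le> y} {y\<in>L. t \<le> y} \<or>
      ({y\<in>Ni x. t \<le> y} = {y\<in>L. t \<le> y} \<and> finless {y\<in>Ni x. y < t} {y\<in>L. y < t})"
      using dec[of "Ni x" L] f fL by simp
    then have "{y\<in>Ni x. t \<le> y} = {}" unfolding e using finless_empty by blast
    then show "Ni x \<subseteq> {y. y < t}" by (auto simp: not_le[symmetric])
  qed
  have main: "ord_iso_on (<) {x. x < N L} (<) {x. N H \<le> x \<and> x < N (H \<union> L)}"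
  proof (rule iso_intro[where f="\<lambda>x. N (H \<union> Ni x)"])
    have ord: "\<forall>a\<in>{x. x < N L}. \<forall>b\<in>{x. x < N L}. a < b \<longleftrightarrow> N (H \<union> Ni a) < N (H \<union> Ni b)"
    proof (intro ballI)
      fix a b assume a: "a \<in> {x. x < N L}" and b: "b \<in> {x. x < N L}"
      have la: "Ni a \<subseteq> {y. y < t}" and lb: "Ni b \<subseteq> {y. y < t}" using below a b by auto
      have "N (H \<union> Ni a) < N (H \<union> Ni b) \<longleftrightarrow> finless (H \<union> Ni a) (H \<union> Ni b)"
        using mN fH by simp
      also have "\<dots> \<longleftrightarrow> finless (Ni a) (Ni b)"
        using dec[of "H \<union> Ni a" "H \<union> Ni b"] fH hiHL[OF la] hiHL[OF lb] loHL[OF la] loHL[OF lb]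
          by (simp add: finless_irrefl)
      finally show "a < b \<longleftrightarrow> N (H \<union> Ni a) < N (H \<union> Ni b)" using lt_Ni by simp
    qed
    then show "\<forall>a\<in>{x. x < N L}. \<forall>b\<in>{x. x < N L}. a < b \<longleftrightarrow> N (H \<union> Ni a) < N (H \<union> Ni b)" .
    show "inj_on (\<lambda>x. N (H \<union> Ni x)) {x. x < N L}"
      using ord unfolding inj_on_def by (metis less_irrefl linorder_neqE)
    show "(\<lambda>x. N (H \<union> Ni x)) ` {x. x < N L} = {x. N H \<le> x \<and> x < N (H \<union> L)}"
    proof
      show "(\<lambda>x. N (H \<union> Ni x)) ` {x. x < N L} \<subseteq> {x. N H \<le> x \<and> x < N (H \<union> L)}"
      proof clarify
        fix a assume a: "a < N L"
        have la: "Ni a \<subseteq> {y. y < t}" using below a by auto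
        have fa: "finless (Ni a) L" using a mN[of "Ni a" L] fL by simp
        have 1: "\<not> finless (H \<union> Ni a) H"
          using dec[of "H \<union> Ni a" H] fH hiHL[OF la] loHL[OF la] hiH loH 
          by (simp add: finless_irrefl finless_empty)
        have 2: "finless (H \<union> Ni a) (H \<union> L)"
          using dec[of "H \<union> Ni a" "H \<union> L"] fH fL hiHL[OF la] loHL[OF la] hiHL[OF L] loHL[OF L] fa
          by simp
        show "N H \<le> N (H \<union> Ni a) \<and> N (H \<union> Ni a) < N (H \<union> L)"
          using 1 2 mN fH fL by (simp add: not_less)
      qed
      show "{x. N H \<le> x \<and> x < N (H \<union> L)} \<subseteq> (\<lambda>x. N (H \<union> Ni x)) ` {x. x < N L}"
      proof clarify
        fix y assume y1: "N H \<le> y" and y2: "y < N (H \<union> L)"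
        let ?hi = "{x\<in>Ni y. t \<le> x}" and ?lo = "{x\<in>Ni y. x < t}"
        have n1: "\<not> finless (Ni y) H" using y1 mN[of "Ni y" H] fH by simp
        have n2: "finless (Ni y) (H \<union> L)" using y2 mN[of "Ni y" "H \<union> L"] fH fL by simp
        have a1: "\<not> finless ?hi H"
          using n1 dec[of "Ni y" H] fH hiH loH by simp
        have a2: "finless ?hi H \<or> (?hi = H \<and> finless ?lo L)"
          using n2 dec[of "Ni y" "H \<union> L"] fH fL hiHL[OF L] loHL[OF L] by simp
        have hi: "?hi = H" and lo: "finless ?lo L" using a1 a2 by auto
        have fl: "finite ?lo" by simp
        have "N ?lo < N L" using lo mN fl fL by blast
        moreover have "y = N (H \<union> Ni (N ?lo))"
          using hi fl hi_lo_split[of "Ni y" t] by (metis N_Ni Ni_N)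
        ultimately show "y \<in> (\<lambda>x. N (H \<union> Ni x)) ` {x. x < N L}" by blast
      qed
    qed
  qed
  show ?thesis unfolding is_oadd_def using le main ord_iso_sym by blast
qed

end



context NS
begin

lemma is_opow2_N: "is_opow2 e p \<longleftrightarrow> p = N {e}"
  using is_opow2_Ne[of e] is_opow2_unique by blast

lemma opow2_eq: "opow2 e = N {e}"
  unfolding opow2_def using is_opow2_Ne is_opow2_unique by blast

lemma nfsum_iff: "sorted_wrt (>) l \<Longrightarrow> is_nfsum l \<delta> \<longleftrightarrow> \<delta> = N (set l)"
proof (induction l arbitrary: \<delta>)
  case Nil
  then show ?case by (simp add: N_empty)
next
  case (Cons e es)
  have lt: "\<forall>y\<in>set es. y < e" and so: "sorted_wrt (>) es" using Cons.prems by auto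
  have IH: "\<And>q. is_nfsum es q \<longleftrightarrow> q = N (set es)" using Cons.IH[OF so] .
  have split: "is_oadd (N {e}) (N (set es)) (N ({e} \<union> set es))"
    by (rule is_oadd_split[where t=e]) (use lt in auto)
  have "is_nfsum (e # es) \<delta> \<longleftrightarrow> is_oadd (N {e}) (N (set es)) \<delta>"
    by (simp add: is_opow2_N IH)
  also have "\<dots> \<longleftrightarrow> \<delta> = N ({e} \<union> set es)"
    using split is_oadd_unique by blast
  finally show ?case by simp
qed

lemma nfsum_set_iff:
  assumes "finite E" shows "is_nfsum (rev (sorted_list_of_set E)) \<delta> \<longleftrightarrow> \<delta> = N E"
proof -
  have "sorted_wrt (<) (sorted_list_of_set E)" using strict_sorted_list_of_set[of E] by simp
  then have "sorted_wrt (>) (rev (sorted_list_of_set E))" by (simp add: sorted_wrt_rev)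
  then show ?thesis using nfsum_iff assms by simp
qed

lemma Lset_eq: "Lset \<delta> = Ni \<delta>"
  unfolding Lset_def
proof (rule the_equality)
  show "finite (Ni \<delta>) \<and> is_nfsum (rev (sorted_list_of_set (Ni \<delta>))) \<delta>"
    using nfsum_set_iff by simp
  fix E assume "finite E \<and> is_nfsum (rev (sorted_list_of_set E)) \<delta>"
  then show "E = Ni \<delta>" using nfsum_set_iff by auto
qed

lemma ojoin_eq: "ojoin a b = N (Ni a \<union> Ni b)"
  unfolding ojoin_def Lset_eq
proof (rule the_equality)
  show "Ni (N (Ni a \<union> Ni b)) = Ni a \<union> Ni b" by simp
  fix g assume "Ni g = Ni a \<union> Ni b"
  then show "g = N (Ni a \<union> Ni b)" by (metis N_Ni)
qed

lemma oadd_eq: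
  fixes t :: 'k
  assumes fH: "finite H" and H: "H \<subseteq> {x. t \<le> x}" and a: "a < N {t}"
  shows "oadd (N H) a = N (H \<union> Ni a)"
proof -
  have "Ni a \<subseteq> {x. x < t}" using a lt_single by simp
  then have "is_oadd (N H) (N (Ni a)) (N (H \<union> Ni a))" by (intro is_oadd_split[OF fH H]) auto
  then have "is_oadd (N H) a (N (H \<union> Ni a))" by simp
  then show ?thesis unfolding oadd_def using is_oadd_unique by blast
qed

lemma omul_eq:
  fixes \<eta> :: 'k
  assumes bM: "bij_betw M UNIV (N ` {A. finite A \<and> A \<subseteq> {x. \<eta> \<le> x}})"
    and mM: "\<And>a b. a < b \<longleftrightarrow> M a < M b"
  shows "omul (N {\<eta>}) \<gamma> = M \<gamma>"
proof -
  let ?D = "N ` {A. finite A \<and> A \<subseteq> {x. \<eta> \<le> x}}"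
  have MD: "M g \<in> ?D" for g using bM bij_betwE by blast
  have hiM: "Ni (M g) \<subseteq> {x. \<eta> \<le> x}" for g using MD[of g] by auto
  have injM: "M g = M g' \<longleftrightarrow> g = g'" for g g' using mM by (metis less_irrefl linorder_neqE)
  have dec: "\<And>A B. finite A \<Longrightarrow> finite B \<Longrightarrow> finless A B \<longleftrightarrow>
    finless {x\<in>A. \<eta> \<le> x} {x\<in>B. \<eta> \<le> x} \<or>
    ({x\<in>A. \<eta> \<le> x} = {x\<in>B. \<eta> \<le> x} \<and> finless {x\<in>A. x < \<eta>} {x\<in>B. x < \<eta>})"
    by (rule finless_dec)
  have hi: "\<And>H L. H \<subseteq> {x. \<eta> \<le> x} \<Longrightarrow> L \<subseteq> {x. x < \<eta>} \<Longrightarrow> {x\<in>H \<union> L. \<eta> \<le> x} = H"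
    by auto
  have lo: "\<And>H L. H \<subseteq> {x. \<eta> \<le> x} \<Longrightarrow> L \<subseteq> {x. x < \<eta>} \<Longrightarrow> {x\<in>H \<union> L. x < \<eta>} = L"
    by auto
  define f where "f = (\<lambda>(g, a). N (Ni (M g) \<union> Ni a))"
  let ?A = "{x. x < \<gamma>} \<times> {x. x < N {\<eta>}}"
  have loA: "\<And>a. a < N {\<eta>} \<Longrightarrow> Ni a \<subseteq> {x. x < \<eta>}" using lt_single by simp
  have cmp: "f (g, a) < f (g', a') \<longleftrightarrow> g < g' \<or> (g = g' \<and> a < a')"
    if "a < N {\<eta>}" "a' < N {\<eta>}" for g a g' a'
  proof -
    have la: "Ni a \<subseteq> {x. x < \<eta>}" and la': "Ni a' \<subseteq> {x. x < \<eta>}" using loA that by auto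
    have "f (g, a) < f (g', a') \<longleftrightarrow> finless (Ni (M g) \<union> Ni a) (Ni (M g') \<union> Ni a')"
      unfolding f_def using mN by simp
    also have "\<dots> \<longleftrightarrow> finless (Ni (M g)) (Ni (M g')) \<or> (Ni (M g) = Ni (M g') \<and> finless (Ni a) (Ni a'))"
      using dec[of "Ni (M g) \<union> Ni a" "Ni (M g') \<union> Ni a'"]
        hi[OF hiM la] hi[OF hiM la'] lo[OF hiM la] lo[OF hiM la'] by simp
    also have "\<dots> \<longleftrightarrow> M g < M g' \<or> (M g = M g' \<and> a < a')"
      using lt_Ni by (metis N_Ni)
    also have "\<dots> \<longleftrightarrow> g < g' \<or> (g = g' \<and> a < a')" using mM injM by simp
    finally show ?thesis .
  qed
  have "is_omul (N {\<eta>}) \<gamma> (M \<gamma>)"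
    unfolding is_omul_def
  proof (rule iso_intro[where f=f])
    show "\<forall>p\<in>?A. \<forall>q\<in>?A. lexless p q \<longleftrightarrow> f p < f q"
      using cmp unfolding lexless_def by auto
    show "inj_on f ?A"
    proof (rule inj_onI)
      fix p q assume p: "p \<in> ?A" and q: "q \<in> ?A" and e: "f p = f q"
      obtain g a g' a' where pq: "p = (g, a)" "q = (g', a')" by (cases p, cases q) auto
      have "\<not> f p < f q" "\<not> f q < f p" using e by auto
      then show "p = q" using cmp[of a a' g g'] cmp[of a' a g' g] p q pq
        by (auto dest: linorder_neqE)
    qed
    show "f ` ?A = {x. x < M \<gamma>}"
    proof
      have hg: "Ni (M \<gamma>) \<subseteq> {x. \<eta> \<le> x}" by (rule hiM)
      have lg: "{x\<in>Ni (M \<gamma>). x < \<eta>} = {}" and hg': "{x\<in>Ni (M \<gamma>). \<eta> \<le> x} = Ni (M \<gamma>)"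
        using hg by auto
      show "f ` ?A \<subseteq> {x. x < M \<gamma>}"
      proof clarify
        fix g a assume g: "g < \<gamma>" and a: "a < N {\<eta>}"
        have la: "Ni a \<subseteq> {x. x < \<eta>}" using loA a by auto
        have "finless (Ni (M g)) (Ni (M \<gamma>))" using mM[of g \<gamma>] g lt_Ni by simp
        then have "finless (Ni (M g) \<union> Ni a) (Ni (M \<gamma>))"
          using dec[of "Ni (M g) \<union> Ni a" "Ni (M \<gamma>)"] hi[OF hiM la] lo[OF hiM la] hg' lg by simp
        then show "f (g, a) < M \<gamma>" unfolding f_def using mN[of "Ni (M g) \<union> Ni a" "Ni (M \<gamma>)"] by simp
      qed
      show "{x. x < M \<gamma>} \<subseteq> f ` ?A"
      proof clarify
        fix y assume y: "y < M \<gamma>"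
        let ?hi = "{x\<in>Ni y. \<eta> \<le> x}" and ?lo = "{x\<in>Ni y. x < \<eta>}"
        have "finless (Ni y) (Ni (M \<gamma>))" using y lt_Ni by simp
        then have fh: "finless ?hi (Ni (M \<gamma>))"
          using dec[of "Ni y" "Ni (M \<gamma>)"] hg' lg by (simp add: finless_empty)
        have "N ?hi \<in> ?D" by auto
        then obtain g where g: "M g = N ?hi" using bM unfolding bij_betw_def by (metis imageE UNIV_I)
        have "M g < M \<gamma>" using g fh mN[of ?hi "Ni (M \<gamma>)"] by simp
        then have g\<gamma>: "g < \<gamma>" using mM by simp
        have a: "N ?lo < N {\<eta>}" by (subst lt_single) auto
        have "f (g, N ?lo) = N (?hi \<union> ?lo)" unfolding f_def using g by simp
        also have "\<dots> = y" using hi_lo_split[of "Ni y" \<eta>] by (metis N_Ni)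
        finally show "y \<in> f ` ?A" using g\<gamma> a by (metis (no_types, lifting) SigmaI image_eqI mem_Collect_eq)
      qed
    qed
  qed
  then show ?thesis unfolding omul_def using is_omul_unique by blast
qed

end



lemma card_lt:
  assumes card: "card_order {(a::'k::wellorder, b). a \<le> b}"
  shows "|{x::'k. x < a}| <o |UNIV::'k set|"
proof -
  let ?R = "{(a::'k,b). a \<le> b}"
  have WO: "well_order_on UNIV ?R" using card unfolding card_order_on_def by (elim conjE)
  have FR: "Field ?R = UNIV" using well_order_on_Well_order[OF WO] by (elim conjE) (rule sym)
  have CR: "Card_order ?R" using card FR by simp
  have RU0: "|Field ?R| =o ?R" by (rule card_of_Field_ordIso[OF CR])
  have RU: "?R =o |UNIV::'k set|" using ordIso_symmetric[OF RU0] FR by simp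
  have eq: "underS ?R a = {x. x < a}" unfolding underS_def by auto
  have "|underS ?R a| <o ?R" by (rule card_of_underS[OF CR]) (simp add: FR)
  then have "|underS ?R a| <o |UNIV::'k set|" using ordLess_ordIso_trans[OF _ RU] by blast
  then show ?thesis unfolding eq .
qed

lemma card_ge:
  assumes card: "card_order {(a::'k::wellorder, b). a \<le> b}" and inf: "infinite (UNIV :: 'k set)"
  shows "|UNIV::'k set| \<le>o |{x::'k. \<eta> \<le> x}|"
proof -
  have "|{x::'k. \<eta> \<le> x}| <o |UNIV::'k set| \<or> |UNIV::'k set| \<le>o |{x::'k. \<eta> \<le> x}|"
    by (rule ordLess_or_ordLeq[OF card_of_Well_order card_of_Well_order])
  moreover have "\<not> |{x::'k. \<eta> \<le> x}| <o |UNIV::'k set|"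
  proof
    assume h: "|{x::'k. \<eta> \<le> x}| <o |UNIV::'k set|"
    have "|{x::'k. x < \<eta>} \<union> {x. \<eta> \<le> x}| <o |UNIV::'k set|"
      by (rule card_of_Un_ordLess_infinite[OF inf card_lt[OF card] h])
    moreover have "{x::'k. x < \<eta>} \<union> {x. \<eta> \<le> x} = UNIV" by auto
    ultimately show False using ordLess_irreflexive by metis
  qed
  ultimately show ?thesis by blast
qed

context NS
begin

lemma exists_M:
  fixes \<eta> :: 'k
  assumes card: "card_order {(a::'k, b). a \<le> b}" and inf: "infinite (UNIV :: 'k set)"
  shows "\<exists>M::'k \<Rightarrow> 'k. bij_betw M UNIV (N ` {A. finite A \<and> A \<subseteq> {x. \<eta> \<le> x}}) \<and> (\<forall>a b. a < b \<longleftrightarrow> M a < M b)"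
proof -
  let ?R = "{(a::'k,b). a \<le> b}"
  let ?D = "N ` {A. finite A \<and> A \<subseteq> {x. \<eta> \<le> x}}"
  let ?r = "Restr ?R ?D"
  have WO: "well_order_on UNIV ?R" using card unfolding card_order_on_def by (elim conjE)
  have FR: "Field ?R = UNIV" using well_order_on_Well_order[OF WO] by (elim conjE) (rule sym)
  have WR: "Well_order ?R" using WO FR by simp
  have W: "Well_order ?r" by (rule Well_order_Restr[OF WR])
  have Fr: "Field ?r = ?D"
  proof
    show "Field ?r \<subseteq> ?D" by (rule Field_Restr_subset)
    show "?D \<subseteq> Field ?r"
    proof
      fix d assume "d \<in> ?D"
      then have "(d,d) \<in> ?r" by auto
      then show "d \<in> Field ?r" by (rule FieldI1)
    qed
  qed
  have "inj_on (\<lambda>x. N {x}) {x. \<eta> \<le> x} \<and> (\<lambda>x. N {x}) ` {x. \<eta> \<le> x} \<subseteq> ?D"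
    using N_inj by (auto simp: inj_on_def)
  then have "|{x::'k. \<eta> \<le> x}| \<le>o |?D|" using card_of_ordLeq by blast
  then have c1: "|UNIV::'k set| \<le>o |Field ?r|"
    unfolding Fr by (rule ordLeq_transitive[OF card_ge[OF card inf]])
  have c3: "\<forall>a\<in>Field ?r. |underS ?r a| <o |UNIV::'k set|"
  proof
    fix a assume "a \<in> Field ?r"
    have "underS ?r a \<subseteq> {x. x < a}" unfolding underS_def by auto
    then show "|underS ?r a| <o |UNIV::'k set|"
      by (rule ordLeq_ordLess_trans[OF card_of_mono1 card_lt[OF card]])
  qed
  obtain g where g: "iso ?r ?R g" using wo_iso[OF card W c1 c3] by blast
  then have bg: "bij_betw g ?D UNIV"
    and og: "\<forall>a\<in>?D. \<forall>b\<in>?D. (a, b) \<in> ?r \<longleftrightarrow> (g a, g b) \<in> ?R"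
    unfolding iso_iff2 Fr FR by auto
  define M where "M = inv_into ?D g"
  have bM: "bij_betw M UNIV ?D" unfolding M_def by (rule bij_betw_inv_into[OF bg])
  have MD: "M a \<in> ?D" for a using bM bij_betwE by blast
  have gM: "g (M a) = a" for a unfolding M_def using bg bij_betw_inv_into_right by fastforce
  have le: "M a \<le> M b \<longleftrightarrow> a \<le> b" for a b
  proof -
    have "(M a, M b) \<in> ?r \<longleftrightarrow> (g (M a), g (M b)) \<in> ?R" using og MD[of a] MD[of b] by blast
    moreover have "(M a, M b) \<in> ?r \<longleftrightarrow> M a \<le> M b" using MD[of a] MD[of b] by blast
    moreover have "(g (M a), g (M b)) \<in> ?R \<longleftrightarrow> a \<le> b" using gM by simp
    ultimately show ?thesis by simp
  qed
  have "\<forall>a b. a < b \<longleftrightarrow> M a < M b" by (simp add: not_le[symmetric] le)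
  then show ?thesis using bM by blast
qed

end

theorem mainTheorem4:
  fixes S :: "('k::wellorder \<Rightarrow> int) \<Rightarrow> 'z::linordered_idom"
    and \<eta> \<gamma> :: 'k and x :: "'k \<Rightarrow> int"
  assumes "card_order {(a::'k, b). a \<le> b}"
    and "infinite (UNIV :: 'k set)"
    and "euclidean_integers S"
    and "\<forall>\<alpha>. opow2 \<eta> \<le> \<alpha> \<longrightarrow> x \<alpha> = 0"
  shows "S x = S (\<lambda>\<delta>. if \<exists>\<alpha>. \<alpha> < opow2 \<eta> \<and> \<delta> = oadd (omul (opow2 \<eta>) \<gamma>) \<alpha>
                        then x (THE \<alpha>. \<alpha> < opow2 \<eta> \<and> \<delta> = oadd (omul (opow2 \<eta>) \<gamma>) \<alpha>)
                        else 0)"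
proof -
  note card = assms(1) and inf = assms(2) and EI = assms(3) and xz = assms(4)
  obtain N :: "'k set \<Rightarrow> 'k" where bN: "bij_betw N {A. finite A} UNIV"
    and mN: "\<forall>A B. finite A \<longrightarrow> finite B \<longrightarrow> (finless A B \<longleftrightarrow> N A < N B)"
    using exists_N[OF card inf] by (elim exE conjE) (rule that, assumption+)
  interpret NS N using bN mN by unfold_locales auto
  obtain M :: "'k \<Rightarrow> 'k" where bM: "bij_betw M UNIV (N ` {A. finite A \<and> A \<subseteq> {x. \<eta> \<le> x}})"
    and mM: "\<forall>a b. a < b \<longleftrightarrow> M a < M b"
    using exists_M[OF card inf, where \<eta>=\<eta>] by (elim exE conjE) (rule that, assumption+)
  define P where "P = omul (opow2 \<eta>) \<gamma>"
  have P: "P = M \<gamma>" unfolding P_def opow2_eq using omul_eq[OF bM] mM by blast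
  have PD: "P \<in> N ` {A. finite A \<and> A \<subseteq> {x. \<eta> \<le> x}}" using bM P bij_betwE by blast
  define H0 where "H0 = Ni P"
  have H0: "H0 \<subseteq> {x. \<eta> \<le> x}" using PD unfolding H0_def by auto
  have NH0: "N H0 = P" unfolding H0_def by simp
  have op: "opow2 \<eta> = N {\<eta>}" by (rule opow2_eq)
  have xlo: "x a \<noteq> 0 \<Longrightarrow> Ni a \<subseteq> {t. t < \<eta>}" for a
    using xz lt_single op by (metis not_le)
  have oaddP: "a < N {\<eta>} \<Longrightarrow> oadd P a = N (H0 \<union> Ni a)" for a
  proof -
    assume a: "a < N {\<eta>}"
    have "oadd (N H0) a = N (H0 \<union> Ni a)" by (rule oadd_eq[OF _ H0 a]) (simp add: H0_def)
    then show ?thesis using NH0 by simp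
  qed
  define y where "y = (\<lambda>\<delta>. if \<exists>\<alpha>. \<alpha> < opow2 \<eta> \<and> \<delta> = oadd P \<alpha>
                        then x (THE \<alpha>. \<alpha> < opow2 \<eta> \<and> \<delta> = oadd P \<alpha>) else 0)"
  define ee where "ee = (\<lambda>d::'k. if d = P then (1::int) else 0)"
  have e0: "\<forall>x. finite {\<alpha>. x \<alpha> \<noteq> 0} \<longrightarrow> S x = of_int (\<Sum>\<alpha>\<in>{\<alpha>. x \<alpha> \<noteq> 0}. x \<alpha>)"
    and pa: "\<forall>x y. S x * S y = S (\<lambda>\<gamma>. \<Sum>(\<alpha>, \<beta>)\<in>{(\<alpha>, \<beta>). ojoin \<alpha> \<beta> = \<gamma>}. x \<alpha> * y \<beta>)"
    using EI unfolding euclidean_integers_def by blast+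
  have supp: "{\<alpha>. ee \<alpha> \<noteq> 0} = {P}" unfolding ee_def by auto
  have See: "S ee = 1" using e0[rule_format, of ee] supp unfolding ee_def by simp
  define z where "z = (\<lambda>\<delta>. \<Sum>(a, b)\<in>{(a, b). ojoin a b = \<delta>}. x a * ee b)"
  have zy: "z \<delta> = y \<delta>" for \<delta>
  proof -
    let ?A = "Ni \<delta>"
    let ?hi = "{t\<in>?A. \<eta> \<le> t}" and ?lo = "{t\<in>?A. t < \<eta>}"
    let ?Pi = "{(a, b). ojoin a b = \<delta>}"
    have Pi: "(a, b) \<in> ?Pi \<longleftrightarrow> Ni a \<union> Ni b = ?A" for a b
      unfolding ojoin_eq by simp (metis N_Ni Ni_N finite_UnI Ni_fin)
    have finPi: "finite ?Pi"
    proof (rule finite_subset)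
      show "?Pi \<subseteq> (N ` Pow ?A) \<times> (N ` Pow ?A)"
      proof
        fix p assume p: "p \<in> ?Pi"
        obtain a b where ab: "p = (a, b)" by (cases p)
        have "Ni a \<union> Ni b = ?A" using p ab Pi by blast
        then have "Ni a \<in> Pow ?A" "Ni b \<in> Pow ?A" by auto
        then have "a \<in> N ` Pow ?A" "b \<in> N ` Pow ?A" using N_Ni[of a] N_Ni[of b] by (metis image_eqI)+
        then show "p \<in> (N ` Pow ?A) \<times> (N ` Pow ?A)" using ab by simp
      qed
      show "finite ((N ` Pow ?A) \<times> (N ` Pow ?A))" by simp
    qed
    have term0: "x a * ee b = 0" if "(a, b) \<in> ?Pi" "\<not> (?hi = H0 \<and> a = N ?lo \<and> b = P)" for a b
    proof (rule ccontr)
      assume nz: "x a * ee b \<noteq> 0"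
      then have b: "b = P" and xa: "x a \<noteq> 0" unfolding ee_def by (auto split: if_splits)
      have la: "Ni a \<subseteq> {t. t < \<eta>}" using xlo xa by blast
      have un: "Ni a \<union> H0 = ?A" using that(1) Pi b unfolding H0_def by blast
      have "?hi = H0" using un la H0 by auto
      moreover have "Ni a = ?lo" using un la H0 by auto
      then have "a = N ?lo" by (metis N_Ni)
      ultimately show False using that(2) b by blast
    qed
    have lolt: "N ?lo < N {\<eta>}" by (subst lt_single) auto
    show ?thesis
    proof (cases "?hi = H0")
      case True
      have mem: "(N ?lo, P) \<in> ?Pi"
      proof -
        have "Ni (N ?lo) \<union> Ni P = ?lo \<union> ?hi" using True unfolding H0_def by simp
        also have "\<dots> = ?A" by auto
        finally have e: "Ni (N ?lo) \<union> Ni P = ?A" .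
        show ?thesis by (rule iffD2[OF Pi[of "N ?lo" P] e])
      qed
      have "z \<delta> = (\<Sum>(a, b)\<in>{(N ?lo, P)}. x a * ee b)"
        unfolding z_def
      proof (rule sum.mono_neutral_right[OF finPi])
        show "{(N ?lo, P)} \<subseteq> ?Pi" using mem by blast
        show "\<forall>i\<in>?Pi - {(N ?lo, P)}. (case i of (a, b) \<Rightarrow> x a * ee b) = 0"
        proof
          fix i assume i: "i \<in> ?Pi - {(N ?lo, P)}"
          obtain a b where ab: "i = (a, b)" by (cases i)
          have "(a, b) \<in> ?Pi" "\<not> (?hi = H0 \<and> a = N ?lo \<and> b = P)" using i ab by auto
          then have "x a * ee b = 0" by (rule term0)
          then show "(case i of (a, b) \<Rightarrow> x a * ee b) = 0" using ab by simp
        qed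
      qed
      also have "\<dots> = x (N ?lo)" unfolding ee_def by simp
      finally have zd: "z \<delta> = x (N ?lo)" .
      have ex: "N ?lo < opow2 \<eta> \<and> \<delta> = oadd P (N ?lo)"
      proof
        show "N ?lo < opow2 \<eta>" using lolt op by simp
        have "oadd P (N ?lo) = N (H0 \<union> ?lo)" using oaddP[OF lolt] by simp
        also have "H0 \<union> ?lo = ?A" using True by auto
        finally show "\<delta> = oadd P (N ?lo)" by simp
      qed
      have uniq: "\<alpha> = N ?lo" if "\<alpha> < opow2 \<eta> \<and> \<delta> = oadd P \<alpha>" for \<alpha>
      proof -
        have al: "\<alpha> < N {\<eta>}" using that op by simp
        have la: "Ni \<alpha> \<subseteq> {t. t < \<eta>}" using al lt_single by simp
        have "\<delta> = N (H0 \<union> Ni \<alpha>)" using that oaddP[OF al] by simp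
        then have "?A = H0 \<union> Ni \<alpha>" by (simp add: H0_def)
        then have "Ni \<alpha> = ?lo" using la H0 by auto
        then show ?thesis by (metis N_Ni)
      qed
      have "(THE \<alpha>. \<alpha> < opow2 \<eta> \<and> \<delta> = oadd P \<alpha>) = N ?lo"
        using ex uniq by (rule the_equality)
      then have "y \<delta> = x (N ?lo)" unfolding y_def using ex by auto
      then show ?thesis using zd by simp
    next
      case False
      have "z \<delta> = 0" unfolding z_def
      proof (rule sum.neutral, rule ballI)
        fix i assume i: "i \<in> ?Pi"
        obtain a b where ab: "i = (a, b)" by (cases i)
        have "(a, b) \<in> ?Pi" "\<not> (?hi = H0 \<and> a = N ?lo \<and> b = P)" using i ab False by auto
        then have "x a * ee b = 0" by (rule term0)
        then show "(case i of (a, b) \<Rightarrow> x a * ee b) = 0" using ab by simp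
      qed
      moreover have "\<not> (\<exists>\<alpha>. \<alpha> < opow2 \<eta> \<and> \<delta> = oadd P \<alpha>)"
      proof
        assume "\<exists>\<alpha>. \<alpha> < opow2 \<eta> \<and> \<delta> = oadd P \<alpha>"
        then obtain \<alpha> where al: "\<alpha> < N {\<eta>}" and d: "\<delta> = oadd P \<alpha>" using op by auto
        have la: "Ni \<alpha> \<subseteq> {t. t < \<eta>}" using al lt_single by simp
        have "?A = H0 \<union> Ni \<alpha>" using d oaddP[OF al] by (simp add: H0_def)
        then have "?hi = H0" using la H0 by auto
        then show False using False by simp
      qed
      then have "y \<delta> = 0" unfolding y_def by auto
      ultimately show ?thesis by simp
    qed
  qed
  have "S x = S x * S ee" using See by simp
  also have "\<dots> = S z" unfolding z_def using pa by blast
  also have "z = y" using zy by (rule ext)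
  finally show ?thesis unfolding y_def P_def .
qed


end
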